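(* Consider the discrete-time nonlinear system $x^+=AM(x)+Bu$ with (unknown) $A\in\mathbb{R}^{n\times N}$, $B\in\mathbb{R}^{n\times m}$, $M(x)=\begin{bmatrix}x\\ \mathcal{Z}(x)\end{bmatrix}\in\mathbb{R}^N$, $\mathcal{Z}:\mathbb{R}^n\to\mathbb{R}^{N-n}$. Let $\mathcal{U}_0=[u(0),\dots,u(T-1)]$, $\mathcal{X}_1=[x(1),\dots,x(T)]$ and $\mathcal{M}_0=[M(x(0)),\dots,M(x(T-1))]$ be built from a single trajectory $x(t+1)=AM(x(t))+Bu(t)$, with $\mathcal{M}_0$ of full row rank, and let $Q=[Q_1~Q_2]\in\mathbb{R}^{T\times N}$ ($Q_1\in\mathbb{R}^{T\times n}$, $Q_2\in\mathbb{R}^{T\times(N-n)}$) satisfy $\mathcal{M}_0Q=\mathbb{I}_N$. Under the controller $u=\mathcal{U}_0QM(x)$, if the nonlinearity cancellation condition $\mathcal{X}_1Q_2=\mathbf{0}_{n\times(N-n)}$ holds, then for every $k\in\mathbb{N}_{>0}$ the state after $k$ steps of the closed-loop system is $x^{k+}=(\mathcal{X}_1Q_1)^kx$.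
   Context: $\mathbb{I}_N$ is the identity, $\mathbf{0}_{n\times(N-n)}$ the zero matrix; $x^{k+}$ denotes the state reached from $x$ after $k$ iterations of the closed-loop dynamics. *)

theory Defs
  imports "Jordan_Normal_Form.DL_Rank"
begin

definition lift_state :: "(real vec \<Rightarrow> real vec) \<Rightarrow> real vec \<Rightarrow> real vec" where
  "lift_state Z x = x @\<^sub>v Z x"

end

theory Submission
  imports Defs
begin

theorem lemma3:
  fixes n m N T :: nat
    and A B Q :: "real mat"
    and Z :: "real vec \<Rightarrow> real vec"
    and xs us :: "nat \<Rightarrow> real vec"
  assumes nN: "n \<le> N"
    and A: "A \<in> carrier_mat n N"
    and B: "B \<in> carrier_mat n m"
    and Z: "\<And>x. x \<in> carrier_vec n \<Longrightarrow> Z x \<in> carrier_vec (N - n)"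
    and x0: "xs 0 \<in> carrier_vec n"
    and us: "\<And>t. t < T \<Longrightarrow> us t \<in> carrier_vec m"
    and traj: "\<And>t. t < T \<Longrightarrow> xs (Suc t) = A *\<^sub>v lift_state Z (xs t) + B *\<^sub>v us t"
    and rank: "vec_space.rank N (mat_of_cols N (map (\<lambda>t. lift_state Z (xs t)) [0..<T])) = N"
    and Q: "Q \<in> carrier_mat T N"
    and rinv: "mat_of_cols N (map (\<lambda>t. lift_state Z (xs t)) [0..<T]) * Q = 1\<^sub>m N"
    and cancel: "mat_of_cols n (map (\<lambda>t. xs (Suc t)) [0..<T])
                   * mat T (N - n) (\<lambda>(i, j). Q $$ (i, n + j)) = 0\<^sub>m n (N - n)"
  shows "\<forall>x \<in> carrier_vec n. \<forall>k > 0.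
           ((\<lambda>y. A *\<^sub>v lift_state Z y
                  + B *\<^sub>v ((mat_of_cols m (map us [0..<T]) * Q) *\<^sub>v lift_state Z y)) ^^ k) x
           = ((mat_of_cols n (map (\<lambda>t. xs (Suc t)) [0..<T]) * mat T n (\<lambda>(i, j). Q $$ (i, j))) ^\<^sub>m k) *\<^sub>v x"
proof -
  define L where "L = (\<lambda>t. lift_state Z (xs t))"
  define M0 where "M0 = mat_of_cols N (map L [0..<T])"
  define X1 where "X1 = mat_of_cols n (map (\<lambda>t. xs (Suc t)) [0..<T])"
  define U0 where "U0 = mat_of_cols m (map us [0..<T])"
  define Q1 where "Q1 = mat T n (\<lambda>(i, j). Q $$ (i, j))"
  define Q2 where "Q2 = mat T (N - n) (\<lambda>(i, j). Q $$ (i, n + j))"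
  have xsc: "t \<le> T \<Longrightarrow> xs t \<in> carrier_vec n" for t
  proof (induction t)
    case 0 then show ?case using x0 by simp
  next
    case (Suc t)
    then have "xs t \<in> carrier_vec n" by simp
    then have "lift_state Z (xs t) \<in> carrier_vec N" using Z nN unfolding lift_state_def
      by (metis append_carrier_vec le_add_diff_inverse)
    then show ?case using traj[of t] Suc.prems A B us[of t] by simp
  qed
  have Lc: "t < T \<Longrightarrow> L t \<in> carrier_vec N" for t
    using xsc[of t] Z nN unfolding L_def lift_state_def
    by (metis append_carrier_vec le_add_diff_inverse less_imp_le)
  have M0c: "M0 \<in> carrier_mat N T" unfolding M0_def using mat_of_cols_carrier(1)[of N "map L [0..<T]"] by simp
  have X1c: "X1 \<in> carrier_mat n T" unfolding X1_def using mat_of_cols_carrier(1)[of n "map (\<lambda>t. xs (Suc t)) [0..<T]"] by simp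
  have U0c: "U0 \<in> carrier_mat m T" unfolding U0_def using mat_of_cols_carrier(1)[of m "map us [0..<T]"] by simp
  have Q1c: "Q1 \<in> carrier_mat T n" unfolding Q1_def by simp
  have Q2c: "Q2 \<in> carrier_mat T (N - n)" unfolding Q2_def by simp
  have X1eq: "X1 = A * M0 + B * U0"
  proof (rule eq_matI)
    fix i j assume i: "i < dim_row (A * M0 + B * U0)" and j: "j < dim_col (A * M0 + B * U0)"
    then have i': "i < n" and j': "j < T" using A M0c B U0c by auto
    have cM: "col M0 j = L j" unfolding M0_def using j' Lc[OF j'] by (simp add: col_mat_of_cols)
    have cU: "col U0 j = us j" unfolding U0_def using j' us[OF j'] by (simp add: col_mat_of_cols)
    have "(A * M0 + B * U0) $$ (i, j) = (A *\<^sub>v L j + B *\<^sub>v us j) $ i"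
      using i' j' A B M0c U0c cM cU by simp
    also have "\<dots> = xs (Suc j) $ i" using traj[OF j'] L_def by simp
    also have "\<dots> = X1 $$ (i, j)" unfolding X1_def using i' j' by (simp add: mat_of_cols_index)
    finally show "X1 $$ (i, j) = (A * M0 + B * U0) $$ (i, j)" by simp
  qed (use X1c A M0c B U0c in auto)
  have XQ: "X1 * Q = A + B * (U0 * Q)"
  proof -
    have "X1 * Q = A * M0 * Q + B * U0 * Q" unfolding X1eq
      by (rule add_mult_distrib_mat[of _ n T]) (use A M0c B U0c Q in auto)
    also have "A * M0 * Q = A" using assoc_mult_mat[OF A M0c Q] rinv A unfolding M0_def L_def by simp
    also have "B * U0 * Q = B * (U0 * Q)" using assoc_mult_mat[OF B U0c Q] .
    finally show ?thesis .
  qed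
  have Qsplit: "Q *\<^sub>v (y @\<^sub>v z) = Q1 *\<^sub>v y + Q2 *\<^sub>v z"
    if y: "y \<in> carrier_vec n" and z: "z \<in> carrier_vec (N - n)" for y z
  proof (rule eq_vecI)
    fix i assume "i < dim_vec (Q1 *\<^sub>v y + Q2 *\<^sub>v z)"
    then have i: "i < T" using Q2c by simp
    have rq: "row Q i = row Q1 i @\<^sub>v row Q2 i"
      by (rule eq_vecI) (use i Q Q1c Q2c nN in \<open>auto simp: Q1_def Q2_def\<close>)
    have "(Q *\<^sub>v (y @\<^sub>v z)) $ i = row Q i \<bullet> (y @\<^sub>v z)" using i Q by simp
    also have "\<dots> = row Q1 i \<bullet> y + row Q2 i \<bullet> z" unfolding rq
      by (rule scalar_prod_append[OF row_carrier_vec[OF i Q1c] row_carrier_vec[OF i Q2c] y z])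
    finally show "(Q *\<^sub>v (y @\<^sub>v z)) $ i = (Q1 *\<^sub>v y + Q2 *\<^sub>v z) $ i"
      using i Q1c Q2c by simp
  qed (use Q Q1c Q2c y z nN in auto)
  define f where "f = (\<lambda>y. A *\<^sub>v lift_state Z y + B *\<^sub>v ((U0 * Q) *\<^sub>v lift_state Z y))"
  have fstep: "f y = (X1 * Q1) *\<^sub>v y" if y: "y \<in> carrier_vec n" for y
  proof -
    have zc: "Z y \<in> carrier_vec (N - n)" using Z y .
    have lc: "lift_state Z y \<in> carrier_vec N" using y zc nN unfolding lift_state_def
      by (metis append_carrier_vec le_add_diff_inverse)
    have UQ: "U0 * Q \<in> carrier_mat m N" using U0c Q by (rule mult_carrier_mat)
    have BUQ: "B * (U0 * Q) \<in> carrier_mat n N" using B UQ by (rule mult_carrier_mat)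
    have "B *\<^sub>v ((U0 * Q) *\<^sub>v lift_state Z y) = (B * (U0 * Q)) *\<^sub>v lift_state Z y"
      by (rule assoc_mult_mat_vec[symmetric, OF B UQ lc])
    then have "f y = A *\<^sub>v lift_state Z y + (B * (U0 * Q)) *\<^sub>v lift_state Z y"
      unfolding f_def by simp
    also have "\<dots> = (A + B * (U0 * Q)) *\<^sub>v lift_state Z y"
      by (rule add_mult_distrib_mat_vec[symmetric, OF A BUQ lc])
    also have "\<dots> = (X1 * Q) *\<^sub>v lift_state Z y" using XQ by simp
    also have "\<dots> = X1 *\<^sub>v (Q *\<^sub>v lift_state Z y)" by (rule assoc_mult_mat_vec[OF X1c Q lc])
    also have "Q *\<^sub>v lift_state Z y = Q1 *\<^sub>v y + Q2 *\<^sub>v Z y"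
      unfolding lift_state_def using Qsplit[OF y zc] .
    also have "X1 *\<^sub>v (Q1 *\<^sub>v y + Q2 *\<^sub>v Z y) = X1 *\<^sub>v (Q1 *\<^sub>v y) + X1 *\<^sub>v (Q2 *\<^sub>v Z y)"
      by (rule mult_add_distrib_mat_vec[OF X1c]) (use Q1c Q2c y zc in auto)
    also have "X1 *\<^sub>v (Q2 *\<^sub>v Z y) = (X1 * Q2) *\<^sub>v Z y" by (rule assoc_mult_mat_vec[symmetric, OF X1c Q2c zc])
    also have "(X1 * Q2) = 0\<^sub>m n (N - n)" using cancel unfolding X1_def Q2_def .
    also have "0\<^sub>m n (N - n) *\<^sub>v Z y = 0\<^sub>v n"
      by (rule eq_vecI) (use zc in \<open>auto simp: scalar_prod_def\<close>)
    also have "X1 *\<^sub>v (Q1 *\<^sub>v y) = (X1 * Q1) *\<^sub>v y" by (rule assoc_mult_mat_vec[symmetric, OF X1c Q1c y])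
    finally show ?thesis using X1c Q1c y by simp
  qed
  have X1Q1c: "X1 * Q1 \<in> carrier_mat n n" using X1c Q1c by simp
  have main: "x \<in> carrier_vec n \<Longrightarrow> (f ^^ k) x = ((X1 * Q1) ^\<^sub>m k) *\<^sub>v x" for x k
  proof (induction k arbitrary: x)
    case 0 then show ?case using X1c by simp
  next
    case (Suc k)
    have fx: "f x = (X1 * Q1) *\<^sub>v x" using fstep Suc.prems by simp
    have fxc: "f x \<in> carrier_vec n" using fx X1Q1c Suc.prems by simp
    have "(f ^^ Suc k) x = (f ^^ k) (f x)" by (metis comp_apply funpow_Suc_right)
    also have "\<dots> = ((X1 * Q1) ^\<^sub>m k) *\<^sub>v ((X1 * Q1) *\<^sub>v x)" using Suc.IH[OF fxc] fx by simp
    also have "\<dots> = ((X1 * Q1) ^\<^sub>m k * (X1 * Q1)) *\<^sub>v x" using X1Q1c Suc.prems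
      by (metis assoc_mult_mat_vec pow_carrier_mat)
    finally show ?case by simp
  qed
  show ?thesis using main unfolding f_def U0_def X1_def Q1_def by blast
qed

end
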